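(* Let $p$ be an odd prime and let $k$ be an integer with $2\le k\le p-1$. Let $k^{-1}$ denote the least non-negative integer congruent to the inverse of $k$ modulo $p$, and let $K=\min\{k,k^{-1}\}$. If $T$ is an orthogonal trade in $B_p$ of index $(1,k)$, then every symbol that occurs in $T$ occurs in $T$ more than $\log_K(p)+1$ times.
   Context: All arithmetic is modulo $p$. A Latin square of order $p$ is viewed as a set of (row, column, symbol) triples in $\mathbb{Z}_p^3$. For $1\le k\le p-1$, $B_p(k)$ is the Latin square with symbol $ki+j$ in cell $(i,j)$, $i,j\in\mathbb{Z}_p$; $B_p=B_p(1)$. A Latin trade in a Latin square $L$ is a subset $T\subseteq L$ for which there is a partial Latin square $T'$ (a disjoint mate) such that $T$ and $T'$ occupy the same set of cells, $T\cap T'=\emptyset$, and each row (respectively column) of $T$ contains the same set of symbols as the corresponding row (column) of $T'$. Two Latin squares of order $p$ are orthogonal if superimposing them yields each of the $p^2$ ordered pairs exactly once. An orthogonal trade of index $(\ell,k)$ is a Latin trade $T\subseteq B_p(\ell)$ having a disjoint mate $T'$ such that $(B_p(\ell)\setminus T)\cup T'$ is orthogonal to $B_p(k)$. *)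

theory Defs
  imports Complex_Main "HOL-Computational_Algebra.Primes"
begin

text \<open>Latin squares of order p are sets of (row, column, symbol) triples with
  entries in {0..<p}, representing Z_p; arithmetic is modulo p.\<close>

type_synonym triple = "nat \<times> nat \<times> nat"

definition Bp :: "nat \<Rightarrow> nat \<Rightarrow> triple set" where
  "Bp p k = {(i, j, (k * i + j) mod p) | i j. i < p \<and> j < p}"

definition cells :: "triple set \<Rightarrow> (nat \<times> nat) set" where
  "cells T = {(i, j). \<exists>s. (i, j, s) \<in> T}"

definition row_syms :: "triple set \<Rightarrow> nat \<Rightarrow> nat set" where
  "row_syms T i = {s. \<exists>j. (i, j, s) \<in> T}"

definition col_syms :: "triple set \<Rightarrow> nat \<Rightarrow> nat set" where
  "col_syms T j = {s. \<exists>i. (i, j, s) \<in> T}"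

definition partial_latin_square :: "nat \<Rightarrow> triple set \<Rightarrow> bool" where
  "partial_latin_square p P \<longleftrightarrow>
     (\<forall>(i, j, s) \<in> P. i < p \<and> j < p \<and> s < p) \<and>
     (\<forall>i j s s'. (i, j, s) \<in> P \<longrightarrow> (i, j, s') \<in> P \<longrightarrow> s = s') \<and>
     (\<forall>i j j' s. (i, j, s) \<in> P \<longrightarrow> (i, j', s) \<in> P \<longrightarrow> j = j') \<and>
     (\<forall>i i' j s. (i, j, s) \<in> P \<longrightarrow> (i', j, s) \<in> P \<longrightarrow> i = i')"

definition disjoint_mate :: "nat \<Rightarrow> triple set \<Rightarrow> triple set \<Rightarrow> bool" where
  "disjoint_mate p T T' \<longleftrightarrow>
     partial_latin_square p T' \<and> cells T' = cells T \<and> T \<inter> T' = {} \<and>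
     (\<forall>i. row_syms T' i = row_syms T i) \<and> (\<forall>j. col_syms T' j = col_syms T j)"

definition latin_trade :: "nat \<Rightarrow> triple set \<Rightarrow> triple set \<Rightarrow> bool" where
  "latin_trade p L T \<longleftrightarrow> T \<subseteq> L \<and> (\<exists>T'. disjoint_mate p T T')"

definition orthogonal :: "nat \<Rightarrow> triple set \<Rightarrow> triple set \<Rightarrow> bool" where
  "orthogonal p L1 L2 \<longleftrightarrow>
     (\<forall>a < p. \<forall>b < p. \<exists>!c. fst c < p \<and> snd c < p \<and>
         (fst c, snd c, a) \<in> L1 \<and> (fst c, snd c, b) \<in> L2)"

definition orthogonal_trade :: "nat \<Rightarrow> nat \<Rightarrow> nat \<Rightarrow> triple set \<Rightarrow> bool" where
  "orthogonal_trade p l k T \<longleftrightarrow>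
     T \<subseteq> Bp p l \<and>
     (\<exists>T'. disjoint_mate p T T' \<and> orthogonal p ((Bp p l - T) \<union> T') (Bp p k))"

end

theory Submission imports Defs "HOL-Number_Theory.Number_Theory" "HOL-Library.FuncSet" begin

lemma closure_dist:
  fixes R :: "'a set" and f g :: "'a \<Rightarrow> 'a" and r :: 'a
  assumes fin: "finite R" and r: "r \<in> R" and fR: "f ` R \<subseteq> R" and gR: "g ` R \<subseteq> R"
    and inf: "inj_on f R" and ing: "inj_on g R"
  shows "\<exists>S (d::'a \<Rightarrow> nat). S \<subseteq> R \<and> r \<in> S \<and> bij_betw f S S \<and> bij_betw g S S \<and>
           (\<forall>v\<in>S-{r}. \<exists>w\<in>S. d w < d v \<and> (f w = v \<or> g w = v))"
proof -
  define lay where "lay = rec_nat {r} (\<lambda>_ A. A \<union> f ` A \<union> g ` A)"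
  have lay0: "lay 0 = {r}" by (simp add: lay_def)
  have laySuc: "lay (Suc m) = lay m \<union> f ` lay m \<union> g ` lay m" for m by (simp add: lay_def)
  have layR: "lay m \<subseteq> R" for m
    by (induction m) (use r fR gR in \<open>auto simp: lay0 laySuc\<close>)
  define S where "S = (\<Union>m. lay m)"
  define d where "d v = (LEAST m. v \<in> lay m)" for v
  have SR: "S \<subseteq> R" using layR by (auto simp: S_def)
  have finS: "finite S" using SR fin finite_subset by blast
  have rS: "r \<in> S" using lay0 by (auto simp: S_def)
  have fS: "f ` S \<subseteq> S" unfolding S_def using laySuc by blast
  have gS: "g ` S \<subseteq> S" unfolding S_def using laySuc by blast
  have bf: "bij_betw f S S"
    using endo_inj_surj[OF finS fS] inj_on_subset[OF inf SR] by (simp add: bij_betw_def)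
  have bg: "bij_betw g S S"
    using endo_inj_surj[OF finS gS] inj_on_subset[OF ing SR] by (simp add: bij_betw_def)
  have dist: "\<exists>w\<in>S. d w < d v \<and> (f w = v \<or> g w = v)" if v: "v \<in> S - {r}" for v
  proof -
    from v obtain m0 where "v \<in> lay m0" by (auto simp: S_def)
    hence vin: "v \<in> lay (d v)" unfolding d_def by (rule LeastI)
    have "d v \<noteq> 0"
    proof
      assume "d v = 0"
      with vin lay0 have "v = r" by simp
      with v show False by simp
    qed
    then obtain m where m: "d v = Suc m" by (cases "d v") auto
    have "v \<notin> lay m"
    proof
      assume "v \<in> lay m"
      hence "d v \<le> m" unfolding d_def by (rule Least_le)
      with m show False by simp
    qed
    moreover have "v \<in> lay m \<union> f ` lay m \<union> g ` lay m" using vin m laySuc by simp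
    ultimately obtain w where w: "w \<in> lay m" "f w = v \<or> g w = v" by blast
    have "d w \<le> m" using w(1) unfolding d_def by (rule Least_le)
    moreover have "w \<in> S" using w(1) by (auto simp: S_def)
    ultimately have "w \<in> S \<and> d w < d v \<and> (f w = v \<or> g w = v)" using w m by simp
    thus ?thesis by blast
  qed
  show ?thesis using SR rS bf bg dist by blast
qed

lemma core_count:
  fixes p a :: nat and S :: "nat set" and f g :: "nat \<Rightarrow> nat" and d :: "nat \<Rightarrow> nat" and r u :: nat
  assumes p: "prime p" and finS: "finite S" and Sp: "S \<subseteq> {..<p}"
    and r: "r \<in> S" and u: "u \<in> S" "u \<noteq> r" and a: "a \<ge> 2"
    and bf: "bij_betw f S S" and bg: "bij_betw g S S"
    and rel: "\<forall>i\<in>S. int p dvd (int a * int i - int (f i) - (int a - 1) * int (g i))"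
    and dist: "\<forall>v\<in>S-{r}. \<exists>w\<in>S. d w < d v \<and> (f w = v \<or> g w = v)"
  shows "p \<le> a ^ (card S - 1)"
proof -
  define F where "F = the_inv_into S f"
  define G where "G = the_inv_into S g"
  have inf: "inj_on f S" and fSS: "f ` S = S" using bf by (auto simp: bij_betw_def)
  have ing: "inj_on g S" and gSS: "g ` S = S" using bg by (auto simp: bij_betw_def)
  have bF: "bij_betw F S S" unfolding F_def by (rule bij_betw_the_inv_into[OF bf])
  have bG: "bij_betw G S S" unfolding G_def by (rule bij_betw_the_inv_into[OF bg])
  have Fin: "F v \<in> S" if "v \<in> S" for v using bF that by (auto simp: bij_betw_def)
  have Gin: "G v \<in> S" if "v \<in> S" for v using bG that by (auto simp: bij_betw_def)
  have fF: "f (F v) = v" if "v \<in> S" for v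
    unfolding F_def using f_the_inv_into_f[OF inf] that fSS by auto
  have gG: "g (G v) = v" if "v \<in> S" for v
    unfolding G_def using f_the_inv_into_f[OF ing] that gSS by auto
  have Ff: "F (f v) = v" if "v \<in> S" for v
    unfolding F_def using the_inv_into_f_f[OF inf] that by auto
  have Gg: "G (g v) = v" if "v \<in> S" for v
    unfolding G_def using the_inv_into_f_f[OF ing] that by auto
  define x where "x v = int v - int r" for v
  define val where "val c = (\<Sum>v\<in>S. c v * x v)" for c :: "nat \<Rightarrow> int"
  define cfg where "cfg c N v = c v - int a * N v + N (F v) + (int a - 1) * N (G v)"
    for c N :: "nat \<Rightarrow> int" and v
  have cfg_val: "val (cfg c N) mod int p = val c mod int p" for c N
  proof -
    have s1: "(\<Sum>v\<in>S. N (F v) * x v) = (\<Sum>w\<in>S. N w * x (f w))"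
    proof -
      have "(\<Sum>w\<in>S. N w * x (f w)) = (\<Sum>w\<in>S. (\<lambda>v. N (F v) * x v) (f w))"
        using Ff by (intro sum.cong) auto
      also have "\<dots> = (\<Sum>v\<in>S. N (F v) * x v)" by (rule sum.reindex_bij_betw[OF bf])
      finally show ?thesis by simp
    qed
    have s2: "(\<Sum>v\<in>S. N (G v) * x v) = (\<Sum>w\<in>S. N w * x (g w))"
    proof -
      have "(\<Sum>w\<in>S. N w * x (g w)) = (\<Sum>w\<in>S. (\<lambda>v. N (G v) * x v) (g w))"
        using Gg by (intro sum.cong) auto
      also have "\<dots> = (\<Sum>v\<in>S. N (G v) * x v)" by (rule sum.reindex_bij_betw[OF bg])
      finally show ?thesis by simp
    qed
    have e1: "val (cfg c N) = val c - int a * (\<Sum>v\<in>S. N v * x v) + (\<Sum>v\<in>S. N (F v) * x v)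
               + (int a - 1) * (\<Sum>v\<in>S. N (G v) * x v)"
      unfolding val_def cfg_def
      by (simp add: sum.distrib sum_subtractf sum_distrib_left algebra_simps)
    have e2: "(\<Sum>w\<in>S. N w * (int a * x w - x (f w) - (int a - 1) * x (g w)))
       = int a * (\<Sum>v\<in>S. N v * x v) - (\<Sum>w\<in>S. N w * x (f w)) - (int a - 1) * (\<Sum>w\<in>S. N w * x (g w))"
      by (simp add: sum.distrib sum_subtractf sum_distrib_left algebra_simps)
    have dv: "int p dvd (\<Sum>w\<in>S. N w * (int a * x w - x (f w) - (int a - 1) * x (g w)))"
    proof (rule dvd_sum)
      fix w assume w: "w \<in> S"
      have "int a * x w - x (f w) - (int a - 1) * x (g w)
            = int a * int w - int (f w) - (int a - 1) * int (g w)"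
        by (simp add: x_def algebra_simps)
      thus "int p dvd N w * (int a * x w - x (f w) - (int a - 1) * x (g w))"
        using rel w by simp
    qed
    have "val (cfg c N) - val c = - (\<Sum>w\<in>S. N w * (int a * x w - x (f w) - (int a - 1) * x (g w)))"
      using e1 e2 s1 s2 by simp
    hence "int p dvd (val (cfg c N) - val c)" using dv by simp
    thus ?thesis by (simp add: mod_eq_dvd_iff)
  qed
  define B where "B = PiE (S - {r}) (\<lambda>_. {0..int a - 1})"
  have finB: "finite B" unfolding B_def using finS by (intro finite_PiE) auto
  have cardB: "card B = a ^ (card S - 1)"
    unfolding B_def using finS r by (simp add: card_PiE card_Diff_singleton)
  have cover: "{0..<int p} \<subseteq> (\<lambda>c. val c mod int p) ` B"
  proof
    fix z assume z: "z \<in> {0..<int p}"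
    have ndv: "\<not> int p dvd x u"
    proof
      assume "int p dvd x u"
      hence "int u mod int p = int r mod int p" unfolding x_def by (simp add: mod_eq_dvd_iff)
      moreover have "u < p" "r < p" using u r Sp by auto
      ultimately have "u = r" by simp
      with u show False by simp
    qed
    have "prime (int p)" using p by simp
    hence "coprime (int p) (x u)" using ndv by (rule prime_imp_coprime)
    hence "coprime (x u) (int p)" by (simp add: coprime_commute)
    then obtain y where y: "[x u * y = 1] (mod int p)" using cong_solve_coprime_int by blast
    define m where "m = (y * z) mod int p"
    have m0: "m \<ge> 0" unfolding m_def using p by (simp add: prime_gt_0_nat)
    define c0 where "c0 v = (if v = u then m else 0)" for v :: nat
    have "val c0 = (\<Sum>v\<in>S. (if v = u then m * x v else 0))"
      unfolding val_def c0_def by (intro sum.cong) auto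
    also have "\<dots> = m * x u" using u finS by simp
    finally have vc0: "val c0 = m * x u" .
    have h1: "(x u * y) mod int p = 1 mod int p" using y by (simp add: cong_def)
    have "val c0 mod int p = ((y * z) mod int p * x u) mod int p" by (simp add: vc0 m_def)
    also have "\<dots> = (y * z * x u) mod int p" by (simp add: mod_mult_left_eq)
    also have "\<dots> = ((x u * y) * z) mod int p" by (simp add: algebra_simps)
    also have "\<dots> = (((x u * y) mod int p) * z) mod int p" by (simp add: mod_mult_left_eq)
    also have "\<dots> = z mod int p" using h1 by (simp add: mod_mult_left_eq)
    also have "\<dots> = z" using z by simp
    finally have vz: "val c0 mod int p = z" .
    define D where "D = Max (d ` S)"
    define Bb where "Bb = int a + 1"
    define P where "P = Bb ^ D"
    define \<phi> where "\<phi> v = P - Bb ^ (D - d v)" for v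
    have Bb2: "Bb \<ge> 2" using a by (simp add: Bb_def)
    have dle: "d v \<le> D" if "v \<in> S" for v unfolding D_def using finS that by simp
    have phi0: "\<phi> v \<ge> 0" if "v \<in> S" for v
    proof -
      have "Bb ^ (D - d v) \<le> Bb ^ D" using Bb2 by (intro power_increasing) auto
      thus ?thesis by (simp add: \<phi>_def P_def)
    qed
    have phile: "\<phi> v \<le> P - 1" for v
    proof -
      have "Bb ^ (D - d v) \<ge> 1" using Bb2 by simp
      thus ?thesis by (simp add: \<phi>_def)
    qed
    have phile2: "\<phi> w \<le> P - Bb * Bb ^ (D - d v)" if "w \<in> S" "v \<in> S" "d w < d v" for v w
    proof -
      have "D - d w \<ge> Suc (D - d v)" using that dle[of v] by simp
      hence "Bb ^ (D - d w) \<ge> Bb ^ Suc (D - d v)" using Bb2 by (intro power_increasing) auto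
      thus ?thesis by (simp add: \<phi>_def)
    qed
    have pot: "int a * \<phi> v - \<phi> (F v) - (int a - 1) * \<phi> (G v) \<ge> 1" if v: "v \<in> S - {r}" for v
    proof -
      define E where "E = Bb ^ (D - d v)"
      have E1: "E \<ge> 1" using Bb2 by (simp add: E_def)
      have phiv: "\<phi> v = P - E" by (simp add: \<phi>_def E_def)
      from dist v obtain w where w: "w \<in> S" "d w < d v" "f w = v \<or> g w = v" by blast
      have a1: "int a - 1 \<ge> 0" using a by simp
      show ?thesis
      proof (cases "f w = v")
        case True
        hence "F v = w" using Ff w(1) by auto
        hence h2: "\<phi> (F v) \<le> P - Bb * E" using phile2[of w v] w v by (simp add: E_def)
        have m1: "(int a - 1) * \<phi> (G v) \<le> (int a - 1) * (P - 1)"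
          using phile a1 by (intro mult_left_mono) auto
        have eq: "int a * (P - E) - (P - Bb * E) - (int a - 1) * (P - 1) = E + int a - 1"
          by (simp add: Bb_def algebra_simps)
        have "int a * \<phi> v - \<phi> (F v) - (int a - 1) * \<phi> (G v)
              \<ge> int a * (P - E) - (P - Bb * E) - (int a - 1) * (P - 1)"
          unfolding phiv using h2 m1 by linarith
        thus ?thesis using eq E1 a by linarith
      next
        case False
        hence "g w = v" using w by simp
        hence "G v = w" using Gg w(1) by auto
        hence h2: "\<phi> (G v) \<le> P - Bb * E" using phile2[of w v] w v by (simp add: E_def)
        have m1: "(int a - 1) * \<phi> (G v) \<le> (int a - 1) * (P - Bb * E)"
          using h2 a1 by (intro mult_left_mono) auto
        have eq: "int a * (P - E) - (P - 1) - (int a - 1) * (P - Bb * E)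
            = 1 + (int a * int a - int a - 1) * E"
          by (simp add: Bb_def algebra_simps)
        have nn:  "(int a * int a - int a - 1) * E \<ge> 0"
        proof -
          have "int a * int a \<ge> 2 * int a" using a by (intro mult_right_mono) auto
          hence "int a * int a - int a - 1 \<ge> 0" using a by simp
          thus ?thesis using E1 by simp
        qed
        have "int a * \<phi> v - \<phi> (F v) - (int a - 1) * \<phi> (G v)
              \<ge> int a * (P - E) - (P - 1) - (int a - 1) * (P - Bb * E)"
          unfolding phiv using phile[of "F v"] m1 by linarith
        thus ?thesis using eq nn by linarith
      qed
    qed
    define adm where "adm N \<longleftrightarrow> (\<forall>v\<in>S. N v \<ge> 0) \<and> (\<forall>v\<in>S-{r}. cfg c0 N v \<le> int a - 1)"
      for N :: "nat \<Rightarrow> int"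
    have adm0: "adm (\<lambda>v. m * \<phi> v)"
      unfolding adm_def
    proof (intro conjI ballI)
      fix v assume "v \<in> S" thus "m * \<phi> v \<ge> 0" using m0 phi0 by simp
    next
      fix v assume v: "v \<in> S - {r}"
      have "cfg c0 (\<lambda>v. m * \<phi> v) v = c0 v - m * (int a * \<phi> v - \<phi> (F v) - (int a - 1) * \<phi> (G v))"
        unfolding cfg_def by (simp add: algebra_simps)
      moreover have "m * (int a * \<phi> v - \<phi> (F v) - (int a - 1) * \<phi> (G v)) \<ge> m * 1"
        using pot[OF v] m0 by (intro mult_left_mono) auto
      moreover have "c0 v \<le> m" using m0 by (simp add: c0_def)
      ultimately show "cfg c0 (\<lambda>v. m * \<phi> v) v \<le> int a - 1" using a by simp
    qed
    have "\<exists>N. adm N \<and> (\<forall>N'. adm N' \<longrightarrow> nat (sum N S) \<le> nat (sum N' S))"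
      by (rule ex_has_least_nat[where P=adm and m="\<lambda>N. nat (sum N S)", OF adm0])
    then obtain N where admN: "adm N" and minN: "\<forall>N'. adm N' \<longrightarrow> nat (sum N S) \<le> nat (sum N' S)"
      by blast
    have nonneg: "cfg c0 N v \<ge> 0" if v: "v \<in> S - {r}" for v
    proof (rule ccontr)
      assume neg: "\<not> cfg c0 N v \<ge> 0"
      have NF: "N (F v) \<ge> 0" "N (G v) \<ge> 0" using admN Fin Gin v by (auto simp: adm_def)
      have "c0 v \<ge> 0" using m0 by (simp add: c0_def)
      have Nv: "N v \<ge> 1"
      proof (rule ccontr)
        assume "\<not> N v \<ge> 1"
        hence "N v = 0" using admN v by (auto simp: adm_def)
        hence "cfg c0 N v = c0 v + N (F v) + (int a - 1) * N (G v)" by (simp add: cfg_def)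
        moreover have "(int a - 1) * N (G v) \<ge> 0" using NF a by simp
        ultimately show False using neg NF \<open>c0 v \<ge> 0\<close> by simp
      qed
      define N' where "N' = N(v := N v - 1)"
      have le: "N' w \<le> N w" for w by (simp add: N'_def)
      have adm': "adm N'"
        unfolding adm_def
      proof (intro conjI ballI)
        fix w assume "w \<in> S" thus "N' w \<ge> 0" using admN Nv by (auto simp: adm_def N'_def)
      next
        fix w assume w: "w \<in> S - {r}"
        have t1: "(int a - 1) * N' (G w) \<le> (int a - 1) * N (G w)"
          using le a by (intro mult_left_mono) auto
        show "cfg c0 N' w \<le> int a - 1"
        proof (cases "w = v")
          case True
          have "cfg c0 N' w \<le> cfg c0 N v + int a"
            using True t1 le[of "F w"] unfolding cfg_def by (simp add: N'_def algebra_simps)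
          thus ?thesis using neg by simp
        next
          case False
          have "cfg c0 N' w \<le> cfg c0 N w"
            using False t1 le[of "F w"] unfolding cfg_def by (simp add: N'_def)
          moreover have "cfg c0 N w \<le> int a - 1" using admN w unfolding adm_def by blast
          ultimately show ?thesis by linarith
        qed
      qed
      have "sum N S = N v + sum N (S - {v})" using finS v by (simp add: sum.remove)
      moreover have "sum N' S = N' v + sum N' (S - {v})" using finS v by (simp add: sum.remove)
      moreover have "sum N' (S - {v}) = sum N (S - {v})" by (intro sum.cong) (auto simp: N'_def)
      moreover have "N' v = N v - 1" by (simp add: N'_def)
      moreover have "sum N' S \<ge> 0" using adm' by (auto simp: adm_def intro: sum_nonneg)
      ultimately have "nat (sum N' S) < nat (sum N S)" by simp
      with minN adm' show False by fastforce
    qed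
    define c where "c = restrict (cfg c0 N) (S - {r})"
    have cB: "c \<in> B" unfolding B_def c_def
      using nonneg admN by (auto simp: adm_def)
    have "val c = val (cfg c0 N)"
      unfolding val_def c_def by (intro sum.cong) (auto simp: x_def)
    hence "val c mod int p = z" using cfg_val vz by simp
    thus "z \<in> (\<lambda>c. val c mod int p) ` B" using cB by blast
  qed
  have "card {0..<int p} \<le> card ((\<lambda>c. val c mod int p) ` B)"
    using cover finB by (intro card_mono) auto
  also have "\<dots> \<le> card B" using finB by (rule card_image_le)
  finally show ?thesis using cardB by simp
qed


lemma ex1_two: "\<exists>!x. P x \<Longrightarrow> P a \<Longrightarrow> P b \<Longrightarrow> a = b" by blast

lemma small_eq:
  fixes p x y :: nat
  assumes "int p dvd (int x - int y)" "x < p" "y < p"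
  shows "x = y"
proof -
  have "int x mod int p = int y mod int p" using assms(1) by (simp add: mod_eq_dvd_iff)
  thus ?thesis using assms(2,3) by simp
qed

lemma mod_to_dvd:
  fixes p x y :: nat
  assumes "x mod p = y"
  shows "int p dvd (int x - int y)"
proof -
  have "int y = int x mod int p" using assms by (simp add: of_nat_mod[symmetric])
  hence "int x - int y = int p * (int x div int p)" by (simp add: minus_mod_eq_mult_div)
  thus ?thesis by simp
qed

lemma dvd_to_modeq:
  fixes p x y :: nat
  assumes "int p dvd (int x - int y)"
  shows "x mod p = y mod p"
proof -
  have "int x mod int p = int y mod int p" using assms by (simp add: mod_eq_dvd_iff)
  hence "int (x mod p) = int (y mod p)" by (simp add: of_nat_mod)
  thus ?thesis by simp
qed

lemma solve_lin:
  fixes p :: nat and c e :: int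
  assumes p: "prime p" and nd: "\<not> int p dvd c"
  shows "\<exists>t<p. int p dvd (c * int t - e)"
proof -
  have "prime (int p)" using p by simp
  hence "coprime (int p) c" using nd by (rule prime_imp_coprime)
  hence "coprime c (int p)" by (simp add: coprime_commute)
  then obtain y where y: "[c * y = 1] (mod int p)" using cong_solve_coprime_int by blast
  have h1: "(c * y) mod int p = 1 mod int p" using y by (simp add: cong_def)
  define t0 where "t0 = (y * e) mod int p"
  have pp: "int p > 0" using p by (simp add: prime_gt_0_nat)
  have t0: "0 \<le> t0" "t0 < int p" using pp by (auto simp: t0_def)
  have "(c * t0) mod int p = (c * (y * e)) mod int p" by (simp add: t0_def mod_mult_right_eq)
  also have "\<dots> = ((c * y) * e) mod int p" by (simp add: algebra_simps)
  also have "\<dots> = (((c * y) mod int p) * e) mod int p" by (simp add: mod_mult_left_eq)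
  also have "\<dots> = e mod int p" using h1 by (simp add: mod_mult_left_eq)
  finally have "int p dvd (c * t0 - e)" by (simp add: mod_eq_dvd_iff)
  moreover have "int (nat t0) = t0" using t0 by simp
  moreover have "nat t0 < p" using t0 by simp
  ultimately show ?thesis by metis
qed

lemma bound_from_rel:
  fixes p a :: nat and R :: "nat set" and f g :: "nat \<Rightarrow> nat" and r :: nat
  assumes p: "prime p" and Rp: "R \<subseteq> {..<p}" and r: "r \<in> R" and a: "a \<ge> 2"
    and fR: "f ` R \<subseteq> R" and gR: "g ` R \<subseteq> R" and inf: "inj_on f R" and ing: "inj_on g R"
    and fr: "f r \<noteq> r"
    and rel: "\<forall>i\<in>R. int p dvd (int a * int i - int (f i) - (int a - 1) * int (g i))"
  shows "p \<le> a ^ (card R - 1)"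
proof -
  have finR: "finite R" using Rp finite_subset by blast
  obtain S and d :: "nat \<Rightarrow> nat" where S: "S \<subseteq> R" "r \<in> S" "bij_betw f S S" "bij_betw g S S"
    "\<forall>v\<in>S-{r}. \<exists>w\<in>S. d w < d v \<and> (f w = v \<or> g w = v)"
    using closure_dist[OF finR r fR gR inf ing] by blast
  have finS: "finite S" using S(1) finR finite_subset by blast
  have frS: "f r \<in> S" using S(2,3) by (auto simp: bij_betw_def)
  have "p \<le> a ^ (card S - 1)"
    by (rule core_count[OF p finS _ S(2) frS fr a S(3) S(4) _ S(5)])
       (use S(1) Rp rel in auto)
  also have "\<dots> \<le> a ^ (card R - 1)"
    using card_mono[OF finR S(1)] a by (intro power_increasing) auto
  finally show ?thesis .
qed

theorem theorem3p4:
  fixes p k kinv :: nat and T :: "triple set"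
  assumes "prime p" and "odd p"
    and "2 \<le> k" and "k \<le> p - 1"
    and "kinv < p" and "(k * kinv) mod p = 1"
    and "orthogonal_trade p 1 k T"
  shows "\<forall>s. (\<exists>i j. (i, j, s) \<in> T) \<longrightarrow>
           real (card {(i, j). (i, j, s) \<in> T}) > log (real (min k kinv)) (real p) + 1"
proof (intro allI impI)
  fix s assume "\<exists>i j. (i, j, s) \<in> T"
  then obtain i0 j0 where h0: "(i0, j0, s) \<in> T" by blast
  note p = assms(1)
  have p2: "p \<ge> 2" using p by (simp add: prime_ge_2_nat)
  have kp: "k < p" using assms(4) p2 by simp
  from assms(7) obtain T' where TB: "T \<subseteq> Bp p 1" and dm: "disjoint_mate p T T'"
    and orth: "orthogonal p ((Bp p 1 - T) \<union> T') (Bp p k)"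
    unfolding orthogonal_trade_def by blast
  define L where "L = (Bp p 1 - T) \<union> T'"
  have pls: "partial_latin_square p T'" and disj: "T \<inter> T' = {}"
    and rows: "\<And>i. row_syms T' i = row_syms T i" and cols: "\<And>j. col_syms T' j = col_syms T j"
    using dm unfolding disjoint_mate_def by auto
  have TB': "i < p \<and> j < p \<and> t = (i + j) mod p" if "(i, j, t) \<in> T" for i j t
    using TB that by (auto simp: Bp_def)
  have T'p: "i < p \<and> j < p \<and> t < p" if "(i, j, t) \<in> T'" for i j t
    using pls that unfolding partial_latin_square_def by fast
  have T'col: "i1 = i2" if "(i1, j, t) \<in> T'" "(i2, j, t) \<in> T'" for i1 i2 j t
    using pls that unfolding partial_latin_square_def by blast
  have sp: "s < p" using TB'[OF h0] p2 by simp
  have colT: "j1 = j2" if "(i, j1, s) \<in> T" "(i, j2, s) \<in> T" for i j1 j2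
  proof -
    have a1: "int p dvd (int (i + j1) - int s)" using TB'[OF that(1)] by (intro mod_to_dvd) simp
    have a2: "int p dvd (int (i + j2) - int s)" using TB'[OF that(2)] by (intro mod_to_dvd) simp
    have "int p dvd ((int (i + j1) - int s) - (int (i + j2) - int s))" using a1 a2 by (rule dvd_diff)
    hence "int p dvd (int j1 - int j2)" by simp
    thus ?thesis using TB'[OF that(1)] TB'[OF that(2)] by (intro small_eq) auto
  qed
  have inBk: "(i, j, (k * i + j) mod p) \<in> Bp p k" if "i < p" "j < p" for i j
    using that unfolding Bp_def by blast
  have uniq: "i1 = i2 \<and> j1 = j2"
    if "b < p" "i1 < p" "j1 < p" "i2 < p" "j2 < p" "(i1, j1, s) \<in> L" "(i2, j2, s) \<in> L"
       "(i1, j1, b) \<in> Bp p k" "(i2, j2, b) \<in> Bp p k" for b i1 j1 i2 j2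
  proof -
    define P where "P c \<longleftrightarrow> fst c < p \<and> snd c < p \<and> (fst c, snd c, s) \<in> L \<and> (fst c, snd c, b) \<in> Bp p k" for c
    have E: "\<exists>!c. P c"
      using orth[unfolded orthogonal_def, rule_format, OF sp that(1)] unfolding L_def P_def .
    have "P (i1, j1)" "P (i2, j2)" using that unfolding P_def by simp_all
    hence "(i1, j1) = (i2, j2)" using E by (rule_tac ex1_two)
    thus ?thesis by simp
  qed
  define R where "R = {i. \<exists>j. (i, j, s) \<in> T}"
  have Rp: "R \<subseteq> {..<p}" using TB' by (auto simp: R_def)
  have finR: "finite R" using Rp finite_subset by blast
  have i0R: "i0 \<in> R" using h0 by (auto simp: R_def)
  have ex: "\<forall>i\<in>R. \<exists>q. (i, snd q, s) \<in> T' \<and> (fst q, snd q, s) \<in> T"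
  proof
    fix i assume "i \<in> R"
    then obtain j where "(i, j, s) \<in> T" by (auto simp: R_def)
    hence "s \<in> row_syms T' i" using rows by (auto simp: row_syms_def)
    then obtain j' where j': "(i, j', s) \<in> T'" by (auto simp: row_syms_def)
    hence "s \<in> col_syms T j'" using cols[of j'] by (auto simp: col_syms_def)
    then obtain i' where "(i', j', s) \<in> T" by (auto simp: col_syms_def)
    with j' show "\<exists>q. (i, snd q, s) \<in> T' \<and> (fst q, snd q, s) \<in> T" by (intro exI[of _ "(i', j')"]) simp
  qed
  then obtain Q where Q: "\<forall>i\<in>R. (i, snd (Q i), s) \<in> T' \<and> (fst (Q i), snd (Q i), s) \<in> T"
    by (metis (no_types, lifting) bchoice)
  define \<sigma> where "\<sigma> i = fst (Q i)" for i
  define cj where "cj i = snd (Q i)" for i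
  have sT': "(i, cj i, s) \<in> T'" and sT: "(\<sigma> i, cj i, s) \<in> T" if "i \<in> R" for i
    using Q that by (auto simp: \<sigma>_def cj_def)
  have sR: "\<sigma> ` R \<subseteq> R" using sT by (auto simp: R_def)
  have sinj: "inj_on \<sigma> R"
  proof (rule inj_onI)
    fix i1 i2 assume i: "i1 \<in> R" "i2 \<in> R" "\<sigma> i1 = \<sigma> i2"
    have "cj i1 = cj i2" using sT[OF i(1)] sT[OF i(2)] i(3) by (intro colT) auto
    thus "i1 = i2" using sT'[OF i(1)] sT'[OF i(2)] by (intro T'col) auto
  qed
  have sfix: "\<sigma> i \<noteq> i" if "i \<in> R" for i
    using sT[OF that] sT'[OF that] disj by auto
  have cjp: "cj i < p" "i < p" if "i \<in> R" for i using T'p[OF sT'[OF that]] by auto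
  have rel1: "int p dvd (int (\<sigma> i) + int (cj i) - int s)" if "i \<in> R" for i
    using mod_to_dvd[of "\<sigma> i + cj i" p s] TB'[OF sT[OF that]] by simp
  have k1: "\<not> int p dvd (int k - 1)"
  proof
    assume "int p dvd (int k - 1)"
    hence "int p dvd (int (k - 1) - int 0)" using assms(3) by (simp add: of_nat_diff)
    hence "k - 1 = 0" using kp by (intro small_eq) auto
    thus False using assms(3) by simp
  qed
  have tex: "\<exists>t. t \<in> R \<and> int p dvd ((int k - 1) * int t - (int k * int i + int (cj i) - int s))"
    if iR: "i \<in> R" for i
  proof -
    obtain t where t: "t < p" "int p dvd ((int k - 1) * int t - (int k * int i + int (cj i) - int s))"
      using solve_lin[OF p k1] by blast
    define jt where "jt = (s + (p - t)) mod p"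
    have jtp: "jt < p" using p2 by (simp add: jt_def)
    have "(t + jt) mod p = (t + (s + (p - t))) mod p" by (simp add: jt_def mod_add_right_eq)
    also have "t + (s + (p - t)) = s + p" using t(1) by simp
    finally have tjs: "(t + jt) mod p = s" using sp by simp
    have tB: "(t, jt, s) \<in> Bp p 1" using t(1) jtp tjs unfolding Bp_def by force
    have d1: "int p dvd (int (t + jt) - int s)" using tjs by (intro mod_to_dvd)
    have "int p dvd (((int k - 1) * int t - (int k * int i + int (cj i) - int s)) + (int (t + jt) - int s))"
      using t(2) d1 by (rule dvd_add)
    hence "int p dvd (int (k * t + jt) - int (k * i + cj i))" by (simp add: algebra_simps)
    hence bb: "(k * t + jt) mod p = (k * i + cj i) mod p" by (rule dvd_to_modeq)
    show ?thesis
    proof (cases "t \<in> R")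
      case True thus ?thesis using t by blast
    next
      case False
      hence "(t, jt, s) \<notin> T" by (auto simp: R_def)
      hence tL: "(t, jt, s) \<in> L" using tB by (simp add: L_def)
      have iL: "(i, cj i, s) \<in> L" using sT'[OF iR] by (simp add: L_def)
      have "i = t"
        using uniq[of "(k * i + cj i) mod p" i "cj i" t jt] cjp[OF iR] t(1) jtp tL iL
          inBk[of i "cj i"] inBk[of t jt] bb p2 by simp
      with iR False show ?thesis by simp
    qed
  qed
  then obtain \<tau> where tau: "\<forall>i\<in>R. \<tau> i \<in> R \<and> int p dvd ((int k - 1) * int (\<tau> i) - (int k * int i + int (cj i) - int s))"
    by (metis (no_types, lifting) bchoice)
  have tR: "\<tau> ` R \<subseteq> R" using tau by auto
  have tinj: "inj_on \<tau> R"
  proof (rule inj_onI)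
    fix i1 i2 assume i: "i1 \<in> R" "i2 \<in> R" "\<tau> i1 = \<tau> i2"
    have "int p dvd (((int k - 1) * int (\<tau> i1) - (int k * int i2 + int (cj i2) - int s))
              - ((int k - 1) * int (\<tau> i1) - (int k * int i1 + int (cj i1) - int s)))"
    proof (rule dvd_diff)
      show "int p dvd ((int k - 1) * int (\<tau> i1) - (int k * int i2 + int (cj i2) - int s))"
        using tau i(2) i(3) by metis
      show "int p dvd ((int k - 1) * int (\<tau> i1) - (int k * int i1 + int (cj i1) - int s))"
        using tau i(1) by blast
    qed
    hence "int p dvd (int (k * i1 + cj i1) - int (k * i2 + cj i2))" by (simp add: algebra_simps)
    hence bb: "(k * i1 + cj i1) mod p = (k * i2 + cj i2) mod p" by (rule dvd_to_modeq)
    have "i1 = i2 \<and> cj i1 = cj i2"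
      using uniq[of "(k * i1 + cj i1) mod p" i1 "cj i1" i2 "cj i2"] cjp[OF i(1)] cjp[OF i(2)]
        sT'[OF i(1)] sT'[OF i(2)] inBk[of i1 "cj i1"] inBk[of i2 "cj i2"] bb p2
      by (simp add: L_def)
    thus "i1 = i2" by simp
  qed
  have relk: "\<forall>i\<in>R. int p dvd (int k * int i - int (\<sigma> i) - (int k - 1) * int (\<tau> i))"
  proof
    fix i assume iR: "i \<in> R"
    have "int p dvd (- ((int k - 1) * int (\<tau> i) - (int k * int i + int (cj i) - int s))
                      - (int (\<sigma> i) + int (cj i) - int s))"
    proof (rule dvd_diff)
      show "int p dvd (- ((int k - 1) * int (\<tau> i) - (int k * int i + int (cj i) - int s)))"
        using tau iR by (simp only: dvd_minus_iff)
      show "int p dvd (int (\<sigma> i) + int (cj i) - int s)" by (rule rel1[OF iR])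
    qed
    thus "int p dvd (int k * int i - int (\<sigma> i) - (int k - 1) * int (\<tau> i))"
      by (simp add: algebra_simps)
  qed
  have bound1: "p \<le> k ^ (card R - 1)"
    by (rule bound_from_rel[OF p Rp i0R assms(3) sR tR sinj tinj sfix[OF i0R] relk])
  have bs: "bij_betw \<sigma> R R" using endo_inj_surj[OF finR sR sinj] sinj by (simp add: bij_betw_def)
  define f' where "f' = the_inv_into R \<sigma>"
  have bf': "bij_betw f' R R" unfolding f'_def by (rule bij_betw_the_inv_into[OF bs])
  have f'R: "f' ` R \<subseteq> R" and f'inj: "inj_on f' R" using bf' by (auto simp: bij_betw_def)
  have sf': "\<sigma> (f' b) = b" if "b \<in> R" for b
    unfolding f'_def using f_the_inv_into_f[OF sinj] that bs by (auto simp: bij_betw_def)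
  define g' where "g' = \<tau> \<circ> f'"
  have g'R: "g' ` R \<subseteq> R" using f'R tR by (auto simp: g'_def)
  have g'inj: "inj_on g' R" unfolding g'_def
    using f'inj tinj f'R by (intro comp_inj_on) (auto intro: inj_on_subset)
  have f'fix: "f' i0 \<noteq> i0"
  proof
    assume "f' i0 = i0"
    hence "\<sigma> i0 = i0" using sf'[OF i0R] by simp
    with sfix[OF i0R] show False by simp
  qed
  have kinv0: "kinv \<noteq> 0"
  proof
    assume "kinv = 0" with assms(6) show False by simp
  qed
  have kinv1: "kinv \<noteq> 1"
  proof
    assume "kinv = 1"
    with assms(6) have "k mod p = 1" by simp
    with kp have "k = 1" by simp
    with assms(3) show False by simp
  qed
  have kinv2: "kinv \<ge> 2" using kinv0 kinv1 by simp
  have kk: "int p dvd (int kinv * int k - 1)"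
    using mod_to_dvd[OF assms(6)] by (simp add: algebra_simps)
  have relkinv: "\<forall>b\<in>R. int p dvd (int kinv * int b - int (f' b) - (int kinv - 1) * int (g' b))"
  proof
    fix b assume bR: "b \<in> R"
    define i where "i = f' b"
    have iR: "i \<in> R" using f'R bR by (auto simp: i_def)
    have sb: "\<sigma> i = b" using sf'[OF bR] by (simp add: i_def)
    have r1: "int p dvd (int k * int i - int b - (int k - 1) * int (\<tau> i))" using relk iR sb by auto
    have "int p dvd (- int kinv * (int k * int i - int b - (int k - 1) * int (\<tau> i))
                     + (int kinv * int k - 1) * (int i - int (\<tau> i)))"
      using r1 kk by (intro dvd_add dvd_mult2 dvd_mult) 
    moreover have "- int kinv * (int k * int i - int b - (int k - 1) * int (\<tau> i))
                     + (int kinv * int k - 1) * (int i - int (\<tau> i))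
                   = int kinv * int b - int i - (int kinv - 1) * int (\<tau> i)"
      by (simp add: algebra_simps)
    ultimately show "int p dvd (int kinv * int b - int (f' b) - (int kinv - 1) * int (g' b))"
      by (simp add: i_def g'_def)
  qed
  have bound2: "p \<le> kinv ^ (card R - 1)"
    by (rule bound_from_rel[OF p Rp i0R kinv2 f'R g'R f'inj g'inj f'fix relkinv])
  define K where "K = min k kinv"
  define n where "n = card R"
  have boundK: "p \<le> K ^ (n - 1)"
  proof (cases "k \<le> kinv")
    case True thus ?thesis using bound1 by (simp add: K_def n_def)
  next
    case False thus ?thesis using bound2 by (simp add: K_def n_def)
  qed
  have K2: "K \<ge> 2" using assms(3) kinv2 by (simp add: K_def)
  have Kp: "K < p" using kp by (simp add: K_def)
  have strict: "p < K ^ (n - 1)"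
  proof (rule ccontr)
    assume "\<not> p < K ^ (n - 1)"
    hence peq: "p = K ^ (n - 1)" using boundK by simp
    show False
    proof (cases "n - 1")
      case 0 thus False using peq p2 by simp
    next
      case (Suc m)
      hence "K dvd p" using peq by simp
      hence "K = 1 \<or> K = p" using p by (simp add: prime_nat_iff)
      thus False using K2 Kp by simp
    qed
  qed
  have "card R > 0" using i0R finR card_gt_0_iff by blast
  hence n1: "n \<ge> 1" by (simp add: n_def)
  have cardQ: "card {(i, j). (i, j, s) \<in> T} = n"
  proof -
    define Q where "Q = {(i, j). (i, j, s) \<in> T}"
    have memQ: "(i, j) \<in> Q \<longleftrightarrow> (i, j, s) \<in> T" for i j by (simp add: Q_def)
    have inj: "inj_on fst Q"
    proof (rule inj_onI)
      fix x y assume x: "x \<in> Q" and y: "y \<in> Q" and e: "fst x = fst y"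
      obtain i1 j1 where x': "x = (i1, j1)" by (cases x)
      obtain i2 j2 where y': "y = (i2, j2)" by (cases y)
      have t1: "(i1, j1, s) \<in> T" using x x' memQ by simp
      have t2: "(i1, j2, s) \<in> T" using y y' e x' memQ by simp
      have "j1 = j2" using colT[OF t1 t2] .
      thus "x = y" using x' y' e by simp
    qed
    have img: "fst ` Q = R"
    proof
      show "fst ` Q \<subseteq> R"
      proof
        fix i assume "i \<in> fst ` Q"
        then obtain x where "x \<in> Q" "i = fst x" by blast
        thus "i \<in> R" unfolding R_def Q_def by auto
      qed
      show "R \<subseteq> fst ` Q"
      proof
        fix i assume "i \<in> R"
        then obtain j where "(i, j, s) \<in> T" unfolding R_def by blast
        hence "(i, j) \<in> Q" using memQ by simp
        thus "i \<in> fst ` Q" by (rule rev_image_eqI) simp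
      qed
    qed
    have "card Q = card R" using card_image[OF inj] img by simp
    thus ?thesis by (simp add: Q_def n_def)
  qed
  have Kr: "real K > 1" using K2 by simp
  have r1: "real p < real (K ^ (n - 1))" using strict by (simp only: of_nat_less_iff)
  have r2: "real (K ^ (n - 1)) = real K powr real (n - 1)"
    using Kr by (simp add: powr_realpow)
  have pp: "real p > 0" using p2 by simp
  have r3: "log (real K) (real p) < real (n - 1)"
  proof -
    have "real p < real K powr real (n - 1)" using r1 unfolding r2 .
    thus ?thesis using log_less_iff[OF Kr pp, of "real (n - 1)"] by blast
  qed
  have r4: "real n = real (n - 1) + 1" using n1 by (simp add: of_nat_diff)
  have "log (real (min k kinv)) (real p) + 1 < real n" using r3 r4 unfolding K_def by linarith
  thus "real (card {(i, j). (i, j, s) \<in> T}) > log (real (min k kinv)) (real p) + 1"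
    using cardQ by simp
qed

end
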